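(* Let $A\bowtie^{\theta} I$ be an amalgamated Banach algebra as in the context, and assume that $A\bowtie^\theta I$ is commutative, $\sigma(A)\neq\emptyset$, and $\theta(A)I=\{\theta(a)i: a\in A, i\in I\}$ has dense linear span in $I$. Then $A\bowtie^{\theta} I$ is semisimple if and only if both $A$ and $I$ are semisimple.
   Context: Let $A$ and $B$ be Banach algebras, $\theta:A\to B$ a continuous algebra homomorphism with $\|\theta\|\le 1$, and $I$ a closed two-sided ideal of $B$. The amalgamated Banach algebra $A\bowtie^{\theta} I$ is the Banach space $\{(a,i): a\in A,\ i\in I\}$ with norm $\|(a,i)\|=\|a\|+\|i\|$ and product $(a,i)\cdot(a',i')=(aa',\ \theta(a)i'+i\theta(a')+ii')$. For a commutative Banach algebra $C$, $\sigma(C)$ is the set of nonzero multiplicative linear functionals on $C$, $\mathrm{rad}\,C=\bigcap_{\chi\in\sigma(C)}\ker\chi$ (equal to $C$ if $\sigma(C)=\emptyset$), and $C$ is semisimple if $\mathrm{rad}\,C=\{0\}$. *)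

theory Defs
  imports "HOL-Analysis.Analysis"
begin

class complex_banach_algebra = banach + real_normed_algebra +
  fixes scaleC :: "complex \<Rightarrow> 'a \<Rightarrow> 'a"
  assumes scaleC_add_right: "scaleC c (x + y) = scaleC c x + scaleC c y"
    and scaleC_add_left: "scaleC (c + d) x = scaleC c x + scaleC d x"
    and scaleC_scaleC: "scaleC c (scaleC d x) = scaleC (c * d) x"
    and scaleC_one: "scaleC 1 x = x"
    and scaleR_scaleC: "scaleR r x = scaleC (complex_of_real r) x"
    and norm_scaleC: "norm (scaleC c x) = cmod c * norm x"
    and mult_scaleC_left: "scaleC c x * y = scaleC c (x * y)"
    and mult_scaleC_right: "x * scaleC c y = scaleC c (x * y)"

definition is_character ::
  "'v set \<Rightarrow> ('v \<Rightarrow> 'v \<Rightarrow> 'v) \<Rightarrow> (complex \<Rightarrow> 'v \<Rightarrow> 'v) \<Rightarrow> ('v \<Rightarrow> 'v \<Rightarrow> 'v)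
   \<Rightarrow> ('v \<Rightarrow> complex) \<Rightarrow> bool" where
  "is_character S ad sc mul chi \<longleftrightarrow>
     (\<forall>x\<in>S. \<forall>y\<in>S. chi (ad x y) = chi x + chi y) \<and>
     (\<forall>c. \<forall>x\<in>S. chi (sc c x) = c * chi x) \<and>
     (\<forall>x\<in>S. \<forall>y\<in>S. chi (mul x y) = chi x * chi y) \<and>
     (\<exists>x\<in>S. chi x \<noteq> 0)"

text \<open>Gelfand space sigma(C) (functionals considered as restricted to the carrier).\<close>
definition gelfand_space ::
  "'v set \<Rightarrow> ('v \<Rightarrow> 'v \<Rightarrow> 'v) \<Rightarrow> (complex \<Rightarrow> 'v \<Rightarrow> 'v) \<Rightarrow> ('v \<Rightarrow> 'v \<Rightarrow> 'v)
   \<Rightarrow> ('v \<Rightarrow> complex) set" where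
  "gelfand_space S ad sc mul =
     {chi. is_character S ad sc mul chi \<and> (\<forall>x. x \<notin> S \<longrightarrow> chi x = 0)}"

text \<open>rad C = intersection of kernels of characters (= C if there are none).\<close>
definition radical ::
  "'v set \<Rightarrow> ('v \<Rightarrow> 'v \<Rightarrow> 'v) \<Rightarrow> (complex \<Rightarrow> 'v \<Rightarrow> 'v) \<Rightarrow> ('v \<Rightarrow> 'v \<Rightarrow> 'v) \<Rightarrow> 'v set" where
  "radical S ad sc mul =
     {x\<in>S. \<forall>chi\<in>gelfand_space S ad sc mul. chi x = 0}"

definition semisimple ::
  "'v set \<Rightarrow> 'v \<Rightarrow> ('v \<Rightarrow> 'v \<Rightarrow> 'v) \<Rightarrow> (complex \<Rightarrow> 'v \<Rightarrow> 'v) \<Rightarrow> ('v \<Rightarrow> 'v \<Rightarrow> 'v) \<Rightarrow> bool" where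
  "semisimple S z ad sc mul \<longleftrightarrow> radical S ad sc mul = {z}"

definition algebra_hom :: "('a::complex_banach_algebra \<Rightarrow> 'b::complex_banach_algebra) \<Rightarrow> bool" where
  "algebra_hom \<theta> \<longleftrightarrow> bounded_linear \<theta> \<and> (\<forall>c x. \<theta> (scaleC c x) = scaleC c (\<theta> x)) \<and>
     (\<forall>x y. \<theta> (x * y) = \<theta> x * \<theta> y)"

definition closed_ideal :: "'b::complex_banach_algebra set \<Rightarrow> bool" where
  "closed_ideal I \<longleftrightarrow> closed I \<and> 0 \<in> I \<and> (\<forall>x\<in>I. \<forall>y\<in>I. x + y \<in> I) \<and>
     (\<forall>c. \<forall>x\<in>I. scaleC c x \<in> I) \<and> (\<forall>b. \<forall>x\<in>I. b * x \<in> I \<and> x * b \<in> I)"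

definition cspan :: "'a::complex_banach_algebra set \<Rightarrow> 'a set" where
  "cspan S = {\<Sum>x\<in>T. scaleC (c x) x | T c. finite T \<and> T \<subseteq> S}"

text \<open>The amalgamated algebra A \<bowtie>^\<theta> I, carrier A \<times> I inside 'a \<times> 'b
  (the norm ||a|| + ||i|| plays no role in the algebraic notions below).\<close>
definition amal_carrier :: "'b set \<Rightarrow> ('a \<times> 'b) set" where
  "amal_carrier I = {(a, i). i \<in> I}"

definition amal_add :: "'a::complex_banach_algebra \<times> 'b::complex_banach_algebra \<Rightarrow> 'a \<times> 'b \<Rightarrow> 'a \<times> 'b" where
  "amal_add x y = (fst x + fst y, snd x + snd y)"

definition amal_scal :: "complex \<Rightarrow> 'a::complex_banach_algebra \<times> 'b::complex_banach_algebra \<Rightarrow> 'a \<times> 'b" where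
  "amal_scal c x = (scaleC c (fst x), scaleC c (snd x))"

definition amal_mult :: "('a::complex_banach_algebra \<Rightarrow> 'b::complex_banach_algebra)
    \<Rightarrow> 'a \<times> 'b \<Rightarrow> 'a \<times> 'b \<Rightarrow> 'a \<times> 'b" where
  "amal_mult \<theta> x y = (fst x * fst y, \<theta> (fst x) * snd y + snd x * \<theta> (fst y) + snd x * snd y)"

end

theory Submission
  imports Defs
begin

lemma scaleC_zero_cba: "scaleC c (0::'a::complex_banach_algebra) = 0"
proof -
  have "scaleC c (0::'a) = scaleC c 0 + scaleC c 0" by (metis add.right_neutral scaleC_add_right)
  thus ?thesis by simp
qed

lemma char_zero:
  assumes "is_character S ad sc mul chi" "z \<in> S" "ad z z = z"
  shows "chi z = 0"
proof -
  have h: "\<forall>x\<in>S. \<forall>y\<in>S. chi (ad x y) = chi x + chi y"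
    using assms(1) unfolding is_character_def by (rule conjunct1)
  have "chi (ad z z) = chi z + chi z" using h assms(2) by simp
  thus ?thesis using assms(3) by simp
qed

lemma semisimple_iff:
  assumes "z \<in> S" "ad z z = z"
  shows "semisimple S z ad sc mul \<longleftrightarrow>
    (\<forall>x\<in>S. (\<forall>chi\<in>gelfand_space S ad sc mul. chi x = 0) \<longrightarrow> x = z)"
proof -
  have z: "\<forall>chi\<in>gelfand_space S ad sc mul. chi z = 0"
  proof
    fix chi assume "chi \<in> gelfand_space S ad sc mul"
    hence "is_character S ad sc mul chi" unfolding gelfand_space_def by simp
    thus "chi z = 0" using assms by (rule char_zero)
  qed
  show ?thesis
  proof
    assume "semisimple S z ad sc mul"
    hence r: "radical S ad sc mul = {z}" unfolding semisimple_def .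
    show "\<forall>x\<in>S. (\<forall>chi\<in>gelfand_space S ad sc mul. chi x = 0) \<longrightarrow> x = z"
    proof (intro ballI impI)
      fix x assume "x \<in> S" "\<forall>chi\<in>gelfand_space S ad sc mul. chi x = 0"
      hence "x \<in> radical S ad sc mul" unfolding radical_def by simp
      thus "x = z" using r by simp
    qed
  next
    assume h: "\<forall>x\<in>S. (\<forall>chi\<in>gelfand_space S ad sc mul. chi x = 0) \<longrightarrow> x = z"
    show "semisimple S z ad sc mul" unfolding semisimple_def radical_def
    proof (rule set_eqI, rule iffI)
      fix x assume "x \<in> {x \<in> S. \<forall>chi\<in>gelfand_space S ad sc mul. chi x = 0}"
      hence "x \<in> S" "\<forall>chi\<in>gelfand_space S ad sc mul. chi x = 0" by auto
      hence "x = z" using h by blast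
      thus "x \<in> {z}" by simp
    next
      fix x assume "x \<in> {z}" thus "x \<in> {x \<in> S. \<forall>chi\<in>gelfand_space S ad sc mul. chi x = 0}"
        using z assms by simp
    qed
  qed
qed

theorem corollary5p4:
  fixes \<theta> :: "'a::complex_banach_algebra \<Rightarrow> 'b::complex_banach_algebra"
    and I :: "'b set"
  assumes hom: "algebra_hom \<theta>"
    and norm_le: "\<forall>a. norm (\<theta> a) \<le> norm a"
    and ideal: "closed_ideal I"
    and comm: "\<forall>x\<in>amal_carrier I. \<forall>y\<in>amal_carrier I. amal_mult \<theta> x y = amal_mult \<theta> y x"
    and sigmaA: "gelfand_space (UNIV :: 'a set) (+) scaleC (*) \<noteq> {}"
    and dense: "closure (cspan {\<theta> a * i | a i. i \<in> I}) = I"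
  shows "semisimple (amal_carrier I) (0, 0) amal_add amal_scal (amal_mult \<theta>) \<longleftrightarrow>
           semisimple (UNIV :: 'a set) 0 (+) scaleC (*) \<and> semisimple I 0 (+) scaleC (*)"
proof -
  have bl: "bounded_linear \<theta>" and thsc: "\<And>c x. \<theta> (scaleC c x) = scaleC c (\<theta> x)"
    and thmul: "\<And>x y. \<theta> (x * y) = \<theta> x * \<theta> y"
    using hom unfolding algebra_hom_def by auto
  have th0: "\<theta> 0 = 0" using bl by (simp add: linear_simps)
  have thadd: "\<And>x y. \<theta> (x + y) = \<theta> x + \<theta> y" using bl by (simp add: linear_simps)
  have I0: "0 \<in> I" and Iadd: "\<And>x y. x \<in> I \<Longrightarrow> y \<in> I \<Longrightarrow> x + y \<in> I"
    and Isc: "\<And>c x. x \<in> I \<Longrightarrow> scaleC c x \<in> I"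
    and IL: "\<And>b x. x \<in> I \<Longrightarrow> b * x \<in> I" and IR: "\<And>b x. x \<in> I \<Longrightarrow> x * b \<in> I"
    using ideal unfolding closed_ideal_def by auto
  have carr: "\<And>a i. (a, i) \<in> amal_carrier I \<longleftrightarrow> i \<in> I" unfolding amal_carrier_def by simp
  have cI: "\<And>i j. i \<in> I \<Longrightarrow> j \<in> I \<Longrightarrow> i * j = j * i"
  proof -
    fix i j assume "i \<in> I" "j \<in> I"
    hence "amal_mult \<theta> (0, i) (0, j) = amal_mult \<theta> (0, j) (0, i)" using comm[rule_format, of "(0, i)" "(0, j)"] by (simp add: carr)
    thus "i * j = j * i" unfolding amal_mult_def by (simp add: th0)
  qed
  have cT: "\<And>a i. i \<in> I \<Longrightarrow> \<theta> a * i = i * \<theta> a"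
  proof -
    fix a i assume "i \<in> I"
    hence "amal_mult \<theta> (a, 0) (0, i) = amal_mult \<theta> (0, i) (a, 0)" using comm[rule_format, of "(a, 0)" "(0, i)"] I0 by (simp add: carr)
    thus "\<theta> a * i = i * \<theta> a" unfolding amal_mult_def by (simp add: th0)
  qed
  let ?C = "amal_carrier I :: ('a \<times> 'b) set"
  let ?chC = "gelfand_space ?C amal_add amal_scal (amal_mult \<theta>)"
  let ?chA = "gelfand_space (UNIV :: 'a set) (+) scaleC (*)"
  let ?chI = "gelfand_space I (+) scaleC (*)"
  have SC: "semisimple ?C (0, 0) amal_add amal_scal (amal_mult \<theta>) \<longleftrightarrow>
    (\<forall>x\<in>?C. (\<forall>chi\<in>?chC. chi x = 0) \<longrightarrow> x = (0,0))"
    by (rule semisimple_iff) (auto simp: carr I0 amal_add_def)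
  have SA: "semisimple (UNIV :: 'a set) 0 (+) scaleC (*) \<longleftrightarrow>
    (\<forall>x. (\<forall>chi\<in>?chA. chi x = 0) \<longrightarrow> x = 0)"
    by (subst semisimple_iff) auto
  have SI: "semisimple I 0 (+) scaleC (*) \<longleftrightarrow>
    (\<forall>x\<in>I. (\<forall>chi\<in>?chI. chi x = 0) \<longrightarrow> x = 0)"
    by (rule semisimple_iff) (auto simp: I0)
  have chchar: "is_character ?C amal_add amal_scal (amal_mult \<theta>) chi" if "chi \<in> ?chC" for chi
    using that unfolding gelfand_space_def by simp
  have chadd: "chi (a + a', i + i') = chi (a, i) + chi (a', i')"
    if "chi \<in> ?chC" "i \<in> I" "i' \<in> I" for chi a a' i i'
  proof -
    have h: "\<forall>x\<in>?C. \<forall>y\<in>?C. chi (amal_add x y) = chi x + chi y"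
      using chchar[OF that(1)] unfolding is_character_def by (rule conjunct1)
    have "chi (amal_add (a, i) (a', i')) = chi (a, i) + chi (a', i')"
      using h that(2,3) by (simp add: carr)
    thus ?thesis unfolding amal_add_def by simp
  qed
  have chsc: "chi (scaleC c a, scaleC c i) = c * chi (a, i)"
    if "chi \<in> ?chC" "i \<in> I" for chi a i c
  proof -
    have h: "\<forall>c. \<forall>x\<in>?C. chi (amal_scal c x) = c * chi x"
      using chchar[OF that(1)] unfolding is_character_def by (rule conjunct1[OF conjunct2])
    have "chi (amal_scal c (a, i)) = c * chi (a, i)"
      using h that(2) by (simp add: carr)
    thus ?thesis unfolding amal_scal_def by simp
  qed
  have chmul: "chi (a * a', \<theta> a * i' + i * \<theta> a' + i * i') = chi (a, i) * chi (a', i')"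
    if "chi \<in> ?chC" "i \<in> I" "i' \<in> I" for chi a a' i i'
  proof -
    have h: "\<forall>x\<in>?C. \<forall>y\<in>?C. chi (amal_mult \<theta> x y) = chi x * chi y"
      using chchar[OF that(1)] unfolding is_character_def by (rule conjunct1[OF conjunct2[OF conjunct2]])
    have "chi (amal_mult \<theta> (a, i) (a', i')) = chi (a, i) * chi (a', i')"
      using h that(2,3) by (simp add: carr)
    thus ?thesis unfolding amal_mult_def by simp
  qed
  show ?thesis
  proof
    assume L: "semisimple ?C (0, 0) amal_add amal_scal (amal_mult \<theta>)"
    have PC: "\<forall>x\<in>?C. (\<forall>chi\<in>?chC. chi x = 0) \<longrightarrow> x = (0,0)" using SC L by (rule iffD1)
    have PA: "\<forall>x. (\<forall>chi\<in>?chA. chi x = 0) \<longrightarrow> x = 0"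
    proof (intro allI impI)
      fix a :: 'a assume hA: "\<forall>chi\<in>?chA. chi a = 0"
      have "\<forall>chi\<in>?chC. chi (a, 0) = 0"
      proof
        fix chi assume chi: "chi \<in> ?chC"
        show "chi (a, 0) = 0"
        proof (cases "\<exists>a'. chi (a', 0) \<noteq> 0")
          case True
          have "(\<lambda>x. chi (x, 0)) \<in> ?chA"
            unfolding gelfand_space_def is_character_def mem_Collect_eq
          proof (intro conjI ballI allI impI)
            fix x y :: 'a
            show "chi (x + y, 0) = chi (x, 0) + chi (y, 0)" using chadd[OF chi I0 I0, of x y] by simp
          next
            fix c and x :: 'a
            show "chi (scaleC c x, 0) = c * chi (x, 0)" using chsc[OF chi I0, of c x] by (simp add: scaleC_zero_cba)
          next
            fix x y :: 'a
            show "chi (x * y, 0) = chi (x, 0) * chi (y, 0)" using chmul[OF chi I0 I0, of x y] by (simp add: th0)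
          next
            show "\<exists>x\<in>UNIV. chi (x, 0) \<noteq> 0" using True by simp
          next
            fix x :: 'a assume "x \<notin> UNIV" thus "chi (x, 0) = 0" by simp
          qed
          from bspec[OF hA this] show ?thesis by simp
        qed simp
      qed
      moreover have "(a, 0) \<in> ?C" by (simp add: carr I0)
      ultimately have "(a, 0) = (0, 0)" using PC by blast
      thus "a = 0" by simp
    qed
    have PI: "\<forall>x\<in>I. (\<forall>chi\<in>?chI. chi x = 0) \<longrightarrow> x = 0"
    proof (intro ballI impI)
      fix i assume iI: "i \<in> I" and hI: "\<forall>chi\<in>?chI. chi i = 0"
      have "\<forall>chi\<in>?chC. chi (0, i) = 0"
      proof
        fix chi assume chi: "chi \<in> ?chC"
        show "chi (0, i) = 0"
        proof (cases "\<exists>j\<in>I. chi (0, j) \<noteq> 0")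
          case True
          have "(\<lambda>x. if x \<in> I then chi (0, x) else 0) \<in> ?chI"
            unfolding gelfand_space_def is_character_def mem_Collect_eq
          proof (intro conjI ballI allI impI)
            fix x y assume xy: "x \<in> I" "y \<in> I"
            show "(if x + y \<in> I then chi (0, x + y) else 0) = (if x \<in> I then chi (0, x) else 0) + (if y \<in> I then chi (0, y) else 0)"
              using chadd[OF chi xy, of 0 0] xy Iadd[OF xy] by simp
          next
            fix c x assume xI: "x \<in> I"
            show "(if scaleC c x \<in> I then chi (0, scaleC c x) else 0) = c * (if x \<in> I then chi (0, x) else 0)"
              using chsc[OF chi xI, of c 0] xI Isc[OF xI, of c] by (simp add: scaleC_zero_cba)
          next
            fix x y assume xy: "x \<in> I" "y \<in> I"
            show "(if x * y \<in> I then chi (0, x * y) else 0) = (if x \<in> I then chi (0, x) else 0) * (if y \<in> I then chi (0, y) else 0)"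
              using chmul[OF chi xy, of 0 0] xy IR[OF xy(1), of y] by (simp add: th0)
          next
            show "\<exists>x\<in>I. (if x \<in> I then chi (0, x) else 0) \<noteq> 0" using True by auto
          next
            fix x assume "x \<notin> I" thus "(if x \<in> I then chi (0, x) else 0) = 0" by simp
          qed
          from bspec[OF hI this] iI show ?thesis by simp
        qed (use iI in auto)
      qed
      moreover have "(0, i) \<in> ?C" by (simp add: carr iI)
      ultimately have "(0, i) = (0, 0)" using PC by blast
      thus "i = 0" by simp
    qed
    show "semisimple (UNIV :: 'a set) 0 (+) scaleC (*) \<and> semisimple I 0 (+) scaleC (*)"
      unfolding SA SI using PA PI by (rule conjI)
  next
    assume R: "semisimple (UNIV :: 'a set) 0 (+) scaleC (*) \<and> semisimple I 0 (+) scaleC (*)"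
    have PA: "\<forall>x. (\<forall>chi\<in>?chA. chi x = 0) \<longrightarrow> x = 0" using SA conjunct1[OF R] by (rule iffD1)
    have PI: "\<forall>x\<in>I. (\<forall>chi\<in>?chI. chi x = 0) \<longrightarrow> x = 0" using SI conjunct2[OF R] by (rule iffD1)
    have "\<forall>x\<in>?C. (\<forall>chi\<in>?chC. chi x = 0) \<longrightarrow> x = (0,0)"
    proof (intro ballI impI)
      fix x assume xC: "x \<in> ?C" and hx: "\<forall>chi\<in>?chC. chi x = 0"
      obtain a i where x: "x = (a, i)" by (cases x)
      have iI: "i \<in> I" using xC x by (simp add: carr)
      have a0: "a = 0"
      proof -
        have "\<forall>phi\<in>?chA. phi a = 0"
        proof
          fix phi assume phi: "phi \<in> ?chA"
          have ph: "is_character UNIV (+) scaleC (*) phi" using phi unfolding gelfand_space_def by simp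
          have padd: "\<And>x y. phi (x + y) = phi x + phi y"
            using ph unfolding is_character_def by simp
          have psc: "\<And>c x. phi (scaleC c x) = c * phi x"
            using ph unfolding is_character_def by simp
          have pmul: "\<And>x y. phi (x * y) = phi x * phi y"
            using ph unfolding is_character_def by simp
          have pnz: "\<exists>x. phi x \<noteq> 0"
            using ph unfolding is_character_def by simp
          have "(\<lambda>x. if snd x \<in> I then phi (fst x) else 0) \<in> ?chC"
            unfolding gelfand_space_def is_character_def mem_Collect_eq
          proof (intro conjI ballI allI impI)
            fix x y assume "x \<in> ?C" "y \<in> ?C"
            then obtain a1 i1 a2 i2 where xy: "x = (a1, i1)" "y = (a2, i2)" "i1 \<in> I" "i2 \<in> I"
              using carr by (metis prod.exhaust)
            show "(if snd (amal_add x y) \<in> I then phi (fst (amal_add x y)) else 0) =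
               (if snd x \<in> I then phi (fst x) else 0) + (if snd y \<in> I then phi (fst y) else 0)"
              using xy Iadd[OF xy(3,4)] unfolding amal_add_def by (simp add: padd)
            show "(if snd (amal_mult \<theta> x y) \<in> I then phi (fst (amal_mult \<theta> x y)) else 0) =
               (if snd x \<in> I then phi (fst x) else 0) * (if snd y \<in> I then phi (fst y) else 0)"
            proof -
              have "\<theta> a1 * i2 + i1 * \<theta> a2 + i1 * i2 \<in> I"
                by (rule Iadd[OF Iadd[OF IL[OF xy(4)] IR[OF xy(3)]] IL[OF xy(4)]])
              thus ?thesis using xy unfolding amal_mult_def by (simp add: pmul)
            qed
          next
            fix c x assume "x \<in> ?C"
            then obtain a1 i1 where xy: "x = (a1, i1)" "i1 \<in> I"
              using carr by (metis prod.exhaust)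
            show "(if snd (amal_scal c x) \<in> I then phi (fst (amal_scal c x)) else 0) =
               c * (if snd x \<in> I then phi (fst x) else 0)"
              using xy Isc[OF xy(2), of c] unfolding amal_scal_def by (simp add: psc)
          next
            obtain a1 where "phi a1 \<noteq> 0" using pnz by blast
            hence "(if snd (a1, 0) \<in> I then phi (fst (a1, 0)) else 0) \<noteq> 0" using I0 by simp
            moreover have "(a1, 0) \<in> ?C" by (simp add: carr I0)
            ultimately show "\<exists>x\<in>?C. (if snd x \<in> I then phi (fst x) else 0) \<noteq> 0" by blast
          next
            fix x assume "x \<notin> ?C"
            thus "(if snd x \<in> I then phi (fst x) else 0) = 0" using carr by (metis prod.collapse)
          qed
          from bspec[OF hx this] have "(if snd x \<in> I then phi (fst x) else 0) = 0" by simp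
          thus "phi a = 0" using x iI by simp
        qed
        thus ?thesis by (rule mp[OF spec[OF PA]])
      qed
      have i0: "i = 0"
      proof -
        have "\<forall>psi\<in>?chI. psi i = 0"
        proof
          fix psi assume psi: "psi \<in> ?chI"
          have pchar: "is_character I (+) scaleC (*) psi" using psi unfolding gelfand_space_def by simp
          have padd: "\<And>x y. x \<in> I \<Longrightarrow> y \<in> I \<Longrightarrow> psi (x + y) = psi x + psi y"
            and psc: "\<And>c x. x \<in> I \<Longrightarrow> psi (scaleC c x) = c * psi x"
            and pmul: "\<And>x y. x \<in> I \<Longrightarrow> y \<in> I \<Longrightarrow> psi (x * y) = psi x * psi y"
            using pchar unfolding is_character_def by auto
          have p0: "psi 0 = 0" using char_zero[OF pchar I0] by simp
          have "\<exists>j\<in>I. psi j \<noteq> 0" using pchar unfolding is_character_def by simp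
          then obtain j where jI: "j \<in> I" and pj: "psi j \<noteq> 0" by blast
          have E2: "psi (\<theta> b * k) * psi j = psi (\<theta> b * j) * psi k" if "k \<in> I" for b k
          proof -
            have "psi (\<theta> b * k) * psi j = psi (\<theta> b * k * j)" using pmul IL that jI by simp
            also have "\<theta> b * k * j = \<theta> b * j * k" using cI[OF that jI] by (simp add: mult.assoc)
            also have "psi (\<theta> b * j * k) = psi (\<theta> b * j) * psi k" using pmul IL that jI by simp
            finally show ?thesis .
          qed
          have E1: "psi (\<theta> b * j) * psi (\<theta> b' * j) = psi (\<theta> b * \<theta> b' * j) * psi j" for b b'
          proof -
            have "psi (\<theta> b * j) * psi (\<theta> b' * j) = psi (\<theta> b * j * (\<theta> b' * j))"
              using pmul IL jI by simp
            also have "\<theta> b * j * (\<theta> b' * j) = \<theta> b * (j * \<theta> b') * j" by (simp add: mult.assoc)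
            also have "\<dots> = \<theta> b * \<theta> b' * j * j" using cT[OF jI, of b'] by (simp add: mult.assoc)
            also have "psi (\<theta> b * \<theta> b' * j * j) = psi (\<theta> b * \<theta> b' * j) * psi j"
              by (rule pmul[OF IL[OF jI] jI])
            finally show ?thesis .
          qed
          define chi where "chi = (\<lambda>x. if snd x \<in> I then psi (\<theta> (fst x) * j) / psi j + psi (snd x) else 0)"
          have "chi \<in> ?chC"
            unfolding gelfand_space_def is_character_def mem_Collect_eq
          proof (intro conjI ballI allI impI)
            fix x y assume "x \<in> ?C" "y \<in> ?C"
            then obtain a1 i1 a2 i2 where xy: "x = (a1, i1)" "y = (a2, i2)" "i1 \<in> I" "i2 \<in> I"
              using carr by (metis prod.exhaust)
            show "chi (amal_add x y) = chi x + chi y"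
              using xy Iadd IL jI unfolding chi_def amal_add_def
              by (simp add: thadd distrib_right padd add_divide_distrib)
            show "chi (amal_mult \<theta> x y) = chi x * chi y"
            proof -
              have m: "amal_mult \<theta> x y = (a1 * a2, \<theta> a1 * i2 + i1 * \<theta> a2 + i1 * i2)"
                using xy unfolding amal_mult_def by simp
              have inI: "\<theta> a1 * i2 + i1 * \<theta> a2 + i1 * i2 \<in> I" by (rule Iadd[OF Iadd[OF IL[OF xy(4)] IR[OF xy(3)]] IL[OF xy(4)]])
              have "chi (amal_mult \<theta> x y) = psi (\<theta> a1 * \<theta> a2 * j) / psi j + psi (\<theta> a1 * i2)
                  + psi (\<theta> a2 * i1) + psi i1 * psi i2"
                using m inI xy IL IR Iadd cT[of i1 a2]
                unfolding chi_def by (simp add: thmul padd pmul)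
              also have "\<dots> = (psi (\<theta> a1 * j) / psi j + psi i1) * (psi (\<theta> a2 * j) / psi j + psi i2)"
              proof -
                have e1: "psi (\<theta> a1 * \<theta> a2 * j) = psi (\<theta> a1 * j) * psi (\<theta> a2 * j) / psi j"
                  using E1[of a1 a2] pj by (simp add: field_simps)
                have e2: "psi (\<theta> a1 * i2) = psi (\<theta> a1 * j) * psi i2 / psi j"
                  using E2[OF xy(4), of a1] pj by (simp add: field_simps)
                have e3: "psi (\<theta> a2 * i1) = psi (\<theta> a2 * j) * psi i1 / psi j"
                  using E2[OF xy(3), of a2] pj by (simp add: field_simps)
                show ?thesis unfolding e1 e2 e3 using pj by (simp add: field_simps)
              qed
              also have "\<dots> = chi x * chi y" using xy unfolding chi_def by simp
              finally show ?thesis .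
            qed
          next
            fix c x assume "x \<in> ?C"
            then obtain a1 i1 where xy: "x = (a1, i1)" "i1 \<in> I"
              using carr by (metis prod.exhaust)
            show "chi (amal_scal c x) = c * chi x"
              using xy Isc IL jI unfolding chi_def amal_scal_def
              by (simp add: thsc mult_scaleC_left psc field_simps)
          next
            show "\<exists>x\<in>?C. chi x \<noteq> 0"
            proof (rule bexI[of _ "(0, j)"])
              show "chi (0, j) \<noteq> 0" using jI pj unfolding chi_def by (simp add: th0 p0)
              show "(0, j) \<in> ?C" using jI by (simp add: carr)
            qed
          next
            fix x assume "x \<notin> ?C"
            thus "chi x = 0" unfolding chi_def using carr by (metis prod.collapse)
          qed
          from bspec[OF hx this] have "chi x = 0" .
          thus "psi i = 0" using x a0 iI unfolding chi_def by (simp add: th0 p0)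
        qed
        thus ?thesis by (rule mp[OF bspec[OF PI iI]])
      qed
      show "x = (0, 0)" using x a0 i0 by simp
    qed
    thus "semisimple ?C (0, 0) amal_add amal_scal (amal_mult \<theta>)" by (rule iffD2[OF SC])
  qed
qed

end
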